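(* Let $\Gamma$, $\varphi$, $\Xi$, $(\cdot)^\flat$ and $\mathscr{M}$ be as in the context. For every base $\mathscr{B}\supseteq\mathscr{M}$ and finite multiset of atoms $S$: (1) if $\sigma\multimap\tau\in\Xi$, then $S\vdash_{\mathscr{B}}(\sigma\multimap\tau)^\flat$ iff $S,\sigma^\flat\vdash_{\mathscr{B}}\tau^\flat$; (2) if $\sigma\otimes\tau\in\Xi$, then $S\vdash_{\mathscr{B}}(\sigma\otimes\tau)^\flat$ iff for every $\mathscr{Y}\supseteq\mathscr{B}$, finite multiset of atoms $V$ and atom $p$, if $V,\sigma^\flat,\tau^\flat\vdash_{\mathscr{Y}}p$ then $S,V\vdash_{\mathscr{Y}}p$; (3) if $\mathrm{I}\in\Xi$, then $S\vdash_{\mathscr{B}}\mathrm{I}^\flat$ iff for every $\mathscr{Y}\supseteq\mathscr{B}$, $V$ and atom $p$, if $V\vdash_{\mathscr{Y}}p$ then $S,V\vdash_{\mathscr{Y}}p$.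
   Context: Fix a countably infinite set $\mathbb{A}$ of atoms. IMLL formulas: $\varphi::= p\in\mathbb{A}\mid\varphi\otimes\varphi\mid \mathrm{I}\mid\varphi\multimap\varphi$; multisets are finite, "$,$" is multiset union. An atomic rule is $(P_1\triangleright p_1,\dots,P_n\triangleright p_n)\Rightarrow p$ ($n\ge0$, $P_i$ finite multisets of atoms, $\triangleright p$ abbreviating $\emptyset\triangleright p$); a base is a set of atomic rules. Derivability $\vdash_{\mathscr{B}}$ is the least relation with (Ref) $[p]\vdash_{\mathscr{B}}p$; (App) if $(P_1\triangleright p_1,\dots,P_n\triangleright p_n)\Rightarrow p\in\mathscr{B}$ and $S_i,P_i\vdash_{\mathscr{B}}p_i$ for all $i$, then $S_1,\dots,S_n\vdash_{\mathscr{B}}p$. Fix a finite multiset $\Gamma$ and formula $\varphi$; let $\Xi$ be the set of all subformulas of formulas in $\Gamma$ and of $\varphi$. Let $(\cdot)^\flat:\Xi\to\mathbb{A}$ be an injection with $p^\flat=p$ for atoms $p\in\Xi$ and such that, for non-atomic $\xi$, $\xi^\flat$ is an atom not occurring in $\Xi$. The base $\mathscr{M}$ consists of the rules: for each $\sigma\multimap\tau\in\Xi$, $(\sigma^\flat\triangleright\tau^\flat)\Rightarrow(\sigma\multimap\tau)^\flat$ and $(\triangleright(\sigma\multimap\tau)^\flat,\triangleright\sigma^\flat)\Rightarrow\tau^\flat$; for each $\sigma\otimes\tau\in\Xi$, $(\triangleright\sigma^\flat,\triangleright\tau^\flat)\Rightarrow(\sigma\otimes\tau)^\flat$ and, for every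 atom $p$, $(\triangleright(\sigma\otimes\tau)^\flat,\ \sigma^\flat,\tau^\flat\triangleright p)\Rightarrow p$; if $\mathrm{I}\in\Xi$, the rule $\Rightarrow\mathrm{I}^\flat$ and, for every atom $p$, $(\triangleright\mathrm{I}^\flat,\triangleright p)\Rightarrow p$. *)

theory Defs
  imports Main "HOL-Library.Multiset"
begin

type_synonym atom = nat

datatype formula =
    Atom atom
  | Tensor formula formula
  | One
  | Lolli formula formula

text \<open>An atomic rule (P1 |> p1, ..., Pn |> pn) => p is represented as the pair
  ([(P1,p1),...,(Pn,pn)], p).  A base is a set of atomic rules.\<close>
type_synonym rule = "((atom multiset \<times> atom) list) \<times> atom"
type_synonym base = "rule set"

inductive derives :: "base \<Rightarrow> atom multiset \<Rightarrow> atom \<Rightarrow> bool" where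
  Ref: "derives B {#p#} p"
| App: "\<lbrakk> (prems, p) \<in> B; length Ss = length prems;
          \<forall>i < length prems. derives B (Ss ! i + fst (prems ! i)) (snd (prems ! i)) \<rbrakk>
       \<Longrightarrow> derives B (sum_list Ss) p"

fun subformulas :: "formula \<Rightarrow> formula set" where
  "subformulas (Atom p) = {Atom p}"
| "subformulas (Tensor a b) = insert (Tensor a b) (subformulas a \<union> subformulas b)"
| "subformulas One = {One}"
| "subformulas (Lolli a b) = insert (Lolli a b) (subformulas a \<union> subformulas b)"

definition Xi :: "formula multiset \<Rightarrow> formula \<Rightarrow> formula set" where
  "Xi \<Gamma> \<phi> = (\<Union>\<gamma> \<in> set_mset \<Gamma>. subformulas \<gamma>) \<union> subformulas \<phi>"

definition is_atomic :: "formula \<Rightarrow> bool" where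
  "is_atomic \<xi> \<longleftrightarrow> (\<exists>p. \<xi> = Atom p)"

definition flat_ok :: "formula multiset \<Rightarrow> formula \<Rightarrow> (formula \<Rightarrow> atom) \<Rightarrow> bool" where
  "flat_ok \<Gamma> \<phi> fl \<longleftrightarrow>
     inj_on fl (Xi \<Gamma> \<phi>)
   \<and> (\<forall>p. Atom p \<in> Xi \<Gamma> \<phi> \<longrightarrow> fl (Atom p) = p)
   \<and> (\<forall>\<xi> \<in> Xi \<Gamma> \<phi>. \<not> is_atomic \<xi> \<longrightarrow> Atom (fl \<xi>) \<notin> Xi \<Gamma> \<phi>)"

definition baseM :: "formula multiset \<Rightarrow> formula \<Rightarrow> (formula \<Rightarrow> atom) \<Rightarrow> base" where
  "baseM \<Gamma> \<phi> fl =
     {r. (\<exists>\<sigma> \<tau>. Lolli \<sigma> \<tau> \<in> Xi \<Gamma> \<phi> \<and>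
            (r = ([({#fl \<sigma>#}, fl \<tau>)], fl (Lolli \<sigma> \<tau>))
           \<or> r = ([({#}, fl (Lolli \<sigma> \<tau>)), ({#}, fl \<sigma>)], fl \<tau>)))
       \<or> (\<exists>\<sigma> \<tau>. Tensor \<sigma> \<tau> \<in> Xi \<Gamma> \<phi> \<and>
            (r = ([({#}, fl \<sigma>), ({#}, fl \<tau>)], fl (Tensor \<sigma> \<tau>))
           \<or> (\<exists>p. r = ([({#}, fl (Tensor \<sigma> \<tau>)), ({#fl \<sigma>, fl \<tau>#}, p)], p))))
       \<or> (One \<in> Xi \<Gamma> \<phi> \<and>
            (r = ([], fl One)
           \<or> (\<exists>p. r = ([({#}, fl One), ({#}, p)], p))))}"

end

theory Submission
  imports Defs
begin

lemma derives_mono: "derives B S p \<Longrightarrow> B \<subseteq> Y \<Longrightarrow> derives Y S p"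
proof (induction rule: derives.induct)
  case (Ref B p) then show ?case by (simp add: derives.Ref)
next
  case (App prems p B Ss) then show ?case by (auto intro!: derives.App)
qed

lemma app1: "([(P1,p1)], p) \<in> B \<Longrightarrow> derives B (S1+P1) p1 \<Longrightarrow> derives B S1 p"
  using derives.App[of "[(P1,p1)]" p B "[S1]"] by simp

lemma app2: "([(P1,p1),(P2,p2)], p) \<in> B \<Longrightarrow> derives B (S1+P1) p1 \<Longrightarrow> derives B (S2+P2) p2
  \<Longrightarrow> derives B (S1+S2) p"
  using derives.App[of "[(P1,p1),(P2,p2)]" p B "[S1,S2]"] by (auto simp: less_Suc_eq)

lemma app0: "([], p) \<in> B \<Longrightarrow> derives B {#} p"
  using derives.App[of "[]" p B "[]"] by simp

theorem mainTheorem13: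
  fixes \<Gamma> :: "formula multiset" and \<phi> :: formula and fl :: "formula \<Rightarrow> atom"
    and B :: base and S :: "atom multiset"
  assumes "flat_ok \<Gamma> \<phi> fl"
    and "baseM \<Gamma> \<phi> fl \<subseteq> B"
  shows "(\<forall>\<sigma> \<tau>. Lolli \<sigma> \<tau> \<in> Xi \<Gamma> \<phi> \<longrightarrow>
            (derives B S (fl (Lolli \<sigma> \<tau>)) \<longleftrightarrow> derives B (S + {#fl \<sigma>#}) (fl \<tau>)))
       \<and> (\<forall>\<sigma> \<tau>. Tensor \<sigma> \<tau> \<in> Xi \<Gamma> \<phi> \<longrightarrow>
            (derives B S (fl (Tensor \<sigma> \<tau>)) \<longleftrightarrow>
              (\<forall>Y V p. B \<subseteq> Y \<longrightarrow> derives Y (V + {#fl \<sigma>, fl \<tau>#}) p \<longrightarrow> derives Y (S + V) p)))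
       \<and> (One \<in> Xi \<Gamma> \<phi> \<longrightarrow>
            (derives B S (fl One) \<longleftrightarrow>
              (\<forall>Y V p. B \<subseteq> Y \<longrightarrow> derives Y V p \<longrightarrow> derives Y (S + V) p)))"
  proof (intro conjI allI impI iffI)
  fix \<sigma> \<tau> assume x: "Lolli \<sigma> \<tau> \<in> Xi \<Gamma> \<phi>"
  { assume d: "derives B S (fl (Lolli \<sigma> \<tau>))"
    have r: "([({#}, fl (Lolli \<sigma> \<tau>)), ({#}, fl \<sigma>)], fl \<tau>) \<in> B"
      using assms(2) x unfolding baseM_def by blast
    show "derives B (S + {#fl \<sigma>#}) (fl \<tau>)"
      using app2[OF r, of S "{#fl \<sigma>#}"] d derives.Ref by simp }
  { assume d: "derives B (S + {#fl \<sigma>#}) (fl \<tau>)"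
    have r: "([({#fl \<sigma>#}, fl \<tau>)], fl (Lolli \<sigma> \<tau>)) \<in> B"
      using assms(2) x unfolding baseM_def by blast
    show "derives B S (fl (Lolli \<sigma> \<tau>))" using app1[OF r d] . }
next
  fix \<sigma> \<tau> assume x: "Tensor \<sigma> \<tau> \<in> Xi \<Gamma> \<phi>"
  { fix Y V p assume d: "derives B S (fl (Tensor \<sigma> \<tau>))" and Y: "B \<subseteq> Y"
      and e: "derives Y (V + {#fl \<sigma>, fl \<tau>#}) p"
    have r: "([({#}, fl (Tensor \<sigma> \<tau>)), ({#fl \<sigma>, fl \<tau>#}, p)], p) \<in> Y"
      using assms(2) x Y unfolding baseM_def by blast
    show "derives Y (S + V) p"
      using app2[OF r, of S V] derives_mono[OF d Y] e by simp }
  { assume h: "\<forall>Y V p. B \<subseteq> Y \<longrightarrow> derives Y (V + {#fl \<sigma>, fl \<tau>#}) p \<longrightarrow> derives Y (S + V) p"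
    have r: "([({#}, fl \<sigma>), ({#}, fl \<tau>)], fl (Tensor \<sigma> \<tau>)) \<in> B"
      using assms(2) x unfolding baseM_def by blast
    have "derives B ({#fl \<sigma>#} + {#fl \<tau>#}) (fl (Tensor \<sigma> \<tau>))"
      using app2[OF r, of "{#fl \<sigma>#}" "{#fl \<tau>#}"] derives.Ref[of B "fl \<sigma>"] derives.Ref[of B "fl \<tau>"] by simp
    then have "derives B ({#} + {#fl \<sigma>, fl \<tau>#}) (fl (Tensor \<sigma> \<tau>))" by (simp add: add_mset_commute)
    with h show "derives B S (fl (Tensor \<sigma> \<tau>))" by fastforce }
next
  assume x: "One \<in> Xi \<Gamma> \<phi>"
  { fix Y V p assume d: "derives B S (fl One)" and Y: "B \<subseteq> Y" and e: "derives Y V p"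
    have r: "([({#}, fl One), ({#}, p)], p) \<in> Y"
      using assms(2) x Y unfolding baseM_def by blast
    show "derives Y (S + V) p"
      using app2[OF r, of S V] derives_mono[OF d Y] e by simp }
  { assume h: "\<forall>Y V p. B \<subseteq> Y \<longrightarrow> derives Y V p \<longrightarrow> derives Y (S + V) p"
    have r: "([], fl One) \<in> B"
      using assms(2) x unfolding baseM_def by blast
    from h app0[OF r] show "derives B S (fl One)" by fastforce }
qed

end
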